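(* Let $T$ be a standard tableau of shape $Y$ with $n$ boxes. For $i=1,\dots,n$ let $q_i$ be the index of the column of $T$ containing $i$, and let $p_i$ be the number of rows of length $q_i$ in the subtableau $T[1,\dots,i]$ formed by the entries $1,\dots,i$. (a) For all integers $\kappa_1,\dots,\kappa_n$ with $0\le\kappa_i\le p_i-1$, the tableau $(\delta_n)^{\kappa_n}\cdots(\delta_1)^{\kappa_1}(T)$ is well defined (i.e. at each step $\delta_i$ is applied to a tableau in $D_i$). (b) For every row-standard tableau $\tau$ with $\mathrm{st}(\tau)=T$ there exist unique integers $\kappa_1,\dots,\kappa_n$ with $0\le\kappa_i\le p_i-1$ such that $\tau=(\delta_n)^{\kappa_n}\cdots(\delta_1)^{\kappa_1}(T)$; moreover $n_{\mathrm{inv}}(\tau)=\kappa_1+\dots+\kappa_n$. Consequently, for every $m$, the number of row-standard $\tau$ with $\mathrm{st}(\tau)=T$ and $n_{\mathrm{inv}}(\tau)=m$ equals the number of tuples $(\kappa_1,\dots,\kappa_n)$ with $0\le\kappa_i\le p_i-1$ and $\sum_i\kappa_i=m$.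
   Context: A row-standard tableau of shape $Y$ is a bijective numbering of the boxes of $Y$ by $1,\dots,n$ increasing left to right along rows; it is standard if also increasing top to bottom along columns. The standardization $\mathrm{st}(\tau)$ is the standard tableau obtained by rearranging the entries of each column of $\tau$ increasingly from top to bottom. An inversion of $\tau$ is a pair $i<j$ in the same column such that either (i) $i$ or $j$ has no box immediately to its right and $i$ is below $j$, or (ii) $i,j$ have right neighbours $i',j'$ with $i'>j'$; $n_{\mathrm{inv}}(\tau)$ is their number. For $i\in\{1,\dots,n\}$, $D_i$ is the set of row-standard $\tau$ such that: (1) $i$ is not in the first row, and letting $j$ be the entry immediately above $i$: (2) if $i$ has a right neighbour $i'$ then $j<i'$, and if $j$ has a right neighbour $j'$ then $i<j'$; (3) for every $k$ in the same column as $i,j$ with $\min(i,j)<k<\max(i,j)$, exactly one of $(\min(i,j),k)$, $(k,\max(i,j))$ is an inversion. For $\tau\in D_i$, with $i_1<\dots<i_q=i$ the entries of the row of $i$ up to $i$ and $j_1<\dots<j_q=j$ those of the row of $j$ up to $j$, $\delta_i(\tau)$ is obtained by swapping $i_k$ and $j_k$ for all $k\le q$. *)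

theory Defs
  imports Main
begin

type_synonym box = "nat \<times> nat"   (* (row, column), both 0-indexed; row 0 is the top row *)
type_synonym tableau = "box \<Rightarrow> nat"

definition young :: "nat list \<Rightarrow> bool" where
  "young Y \<longleftrightarrow> sorted (rev Y) \<and> 0 \<notin> set Y"

definition boxes :: "nat list \<Rightarrow> box set" where
  "boxes Y = {(r, c). r < length Y \<and> c < Y ! r}"

definition size_sh :: "nat list \<Rightarrow> nat" where
  "size_sh Y = sum_list Y"

definition tableau :: "nat list \<Rightarrow> tableau \<Rightarrow> bool" where
  "tableau Y \<tau> \<longleftrightarrow> bij_betw \<tau> (boxes Y) {1..size_sh Y} \<and> (\<forall>b. b \<notin> boxes Y \<longrightarrow> \<tau> b = 0)"

definition row_standard :: "nat list \<Rightarrow> tableau \<Rightarrow> bool" where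
  "row_standard Y \<tau> \<longleftrightarrow> tableau Y \<tau> \<and>
     (\<forall>r c. (r, c) \<in> boxes Y \<and> (r, Suc c) \<in> boxes Y \<longrightarrow> \<tau> (r, c) < \<tau> (r, Suc c))"

definition standard :: "nat list \<Rightarrow> tableau \<Rightarrow> bool" where
  "standard Y \<tau> \<longleftrightarrow> row_standard Y \<tau> \<and>
     (\<forall>r c. (r, c) \<in> boxes Y \<and> (Suc r, c) \<in> boxes Y \<longrightarrow> \<tau> (r, c) < \<tau> (Suc r, c))"

definition st :: "nat list \<Rightarrow> tableau \<Rightarrow> tableau" where
  "st Y \<tau> = (\<lambda>(r, c). if (r, c) \<in> boxes Y
      then sorted_list_of_set {\<tau> (r', c) | r'. (r', c) \<in> boxes Y} ! r else 0)"

definition pos :: "nat list \<Rightarrow> tableau \<Rightarrow> nat \<Rightarrow> box" where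
  "pos Y \<tau> a = (THE b. b \<in> boxes Y \<and> \<tau> b = a)"

definition right :: "box \<Rightarrow> box" where
  "right b = (fst b, Suc (snd b))"

definition is_inv :: "nat list \<Rightarrow> tableau \<Rightarrow> box \<Rightarrow> box \<Rightarrow> bool" where
  "is_inv Y \<tau> b1 b2 \<longleftrightarrow> b1 \<in> boxes Y \<and> b2 \<in> boxes Y \<and> snd b1 = snd b2 \<and> \<tau> b1 < \<tau> b2 \<and>
     (((right b1 \<notin> boxes Y \<or> right b2 \<notin> boxes Y) \<and> fst b1 > fst b2) \<or>
      (right b1 \<in> boxes Y \<and> right b2 \<in> boxes Y \<and> \<tau> (right b1) > \<tau> (right b2)))"

definition n_inv :: "nat list \<Rightarrow> tableau \<Rightarrow> nat" where
  "n_inv Y \<tau> = card {(b1, b2). is_inv Y \<tau> b1 b2}"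

definition D :: "nat list \<Rightarrow> nat \<Rightarrow> tableau set" where
  "D Y i = {\<tau>. row_standard Y \<tau> \<and>
     (let (r, c) = pos Y \<tau> i in
        0 < r \<and>
        (let a = (r, c); b = (r - 1, c); j = \<tau> b in
          (right a \<in> boxes Y \<longrightarrow> j < \<tau> (right a)) \<and>
          (right b \<in> boxes Y \<longrightarrow> i < \<tau> (right b)) \<and>
          (let lo = (if i < j then a else b); hi = (if i < j then b else a) in
            \<forall>k \<in> boxes Y. snd k = c \<and> \<tau> lo < \<tau> k \<and> \<tau> k < \<tau> hi \<longrightarrow>
              (is_inv Y \<tau> lo k \<noteq> is_inv Y \<tau> k hi))))}"

definition delta :: "nat list \<Rightarrow> nat \<Rightarrow> tableau \<Rightarrow> tableau" where
  "delta Y i \<tau> = (let (r, c) = pos Y \<tau> i in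
     (\<lambda>(x, y). if y \<le> c \<and> x = r then \<tau> (r - 1, y)
               else if y \<le> c \<and> x = r - 1 then \<tau> (r, y)
               else \<tau> (x, y)))"

(* (delta_m)^(ks!(m-1)) ... (delta_1)^(ks!0) applied to T *)
fun seq_app :: "nat list \<Rightarrow> nat list \<Rightarrow> nat \<Rightarrow> tableau \<Rightarrow> tableau" where
  "seq_app Y ks 0 T = T"
| "seq_app Y ks (Suc m) T = (delta Y (Suc m) ^^ (ks ! m)) (seq_app Y ks m T)"

definition well_defined :: "nat list \<Rightarrow> nat list \<Rightarrow> tableau \<Rightarrow> bool" where
  "well_defined Y ks T \<longleftrightarrow> (\<forall>i \<in> {1..size_sh Y}. \<forall>t < ks ! (i - 1).
      (delta Y i ^^ t) (seq_app Y ks (i - 1) T) \<in> D Y i)"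

definition qcol :: "nat list \<Rightarrow> tableau \<Rightarrow> nat \<Rightarrow> nat" where
  "qcol Y T i = snd (pos Y T i) + 1"

definition prow :: "nat list \<Rightarrow> tableau \<Rightarrow> nat \<Rightarrow> nat" where
  "prow Y T i = card {r. r < length Y \<and>
      card {c. (r, c) \<in> boxes Y \<and> T (r, c) \<le> i} = qcol Y T i}"

definition admissible :: "nat list \<Rightarrow> tableau \<Rightarrow> nat list \<Rightarrow> bool" where
  "admissible Y T ks \<longleftrightarrow> length ks = size_sh Y \<and>
     (\<forall>i \<in> {1..size_sh Y}. ks ! (i - 1) \<le> prow Y T i - 1)"

end

theory Submission
  imports Defs
begin


lemma young_mono: "young Y \<Longrightarrow> i \<le> j \<Longrightarrow> j < length Y \<Longrightarrow> Y!j \<le> Y!i"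
  unfolding young_def by (simp add: sorted_rev_nth_mono)

lemma in_boxes: "(r,c) \<in> boxes Y \<longleftrightarrow> r < length Y \<and> c < Y!r"
  by (simp add: boxes_def)

lemma boxes_down: "young Y \<Longrightarrow> (r,c) \<in> boxes Y \<Longrightarrow> r' \<le> r \<Longrightarrow> c' \<le> c \<Longrightarrow> (r',c') \<in> boxes Y"
  unfolding in_boxes using young_mono[of Y r' r] by fastforce

lemma finite_boxes: "finite (boxes Y)"
proof -
  have "boxes Y \<subseteq> (\<Union>r<length Y. {r} \<times> {..<Y!r})"
    by (auto simp: boxes_def)
  then show ?thesis by (rule finite_subset) auto
qed

lemma tab_inj: "tableau Y s \<Longrightarrow> inj_on s (boxes Y)"
  by (simp add: tableau_def bij_betw_def)
lemma tab_img: "tableau Y s \<Longrightarrow> s ` boxes Y = {1..size_sh Y}"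
  by (simp add: tableau_def bij_betw_def)
lemma tab_range: "tableau Y s \<Longrightarrow> b \<in> boxes Y \<Longrightarrow> 1 \<le> s b \<and> s b \<le> size_sh Y"
  using tab_img by fastforce
lemma tab_out: "tableau Y s \<Longrightarrow> b \<notin> boxes Y \<Longrightarrow> s b = 0"
  by (cases b) (simp add: tableau_def)
lemma tab_eq: "tableau Y s \<Longrightarrow> b \<in> boxes Y \<Longrightarrow> b' \<in> boxes Y \<Longrightarrow> s b = s b' \<longleftrightarrow> b = b'"
  using tab_inj inj_on_eq_iff by metis
lemma tab_ex: "tableau Y s \<Longrightarrow> 1 \<le> a \<Longrightarrow> a \<le> size_sh Y \<Longrightarrow> \<exists>b\<in>boxes Y. s b = a"
  using tab_img by (metis atLeastAtMost_iff imageE)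

lemma pos_eq: "tableau Y s \<Longrightarrow> b \<in> boxes Y \<Longrightarrow> s b = a \<Longrightarrow> pos Y s a = b"
  unfolding pos_def by (rule the_equality) (auto simp: tab_eq)

lemma pos_in: "tableau Y s \<Longrightarrow> 1 \<le> a \<Longrightarrow> a \<le> size_sh Y \<Longrightarrow> pos Y s a \<in> boxes Y \<and> s (pos Y s a) = a"
  using tab_ex pos_eq by metis

lemma rs_tab: "row_standard Y s \<Longrightarrow> tableau Y s" by (simp add: row_standard_def)
lemma std_rs: "standard Y s \<Longrightarrow> row_standard Y s" by (simp add: standard_def)

lemma rs_lt: assumes "row_standard Y s" "(r,c') \<in> boxes Y" "c < c'"
  shows "s (r,c) < s (r,c')"
  using assms(2,3)
proof (induction c' rule: less_induct)
  case (less x)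
  then obtain y where x: "x = Suc y" by (cases x) auto
  have b: "(r,y) \<in> boxes Y" using less.prems by (auto simp: in_boxes x)
  have "s (r,y) < s (r,x)" using assms(1) b less.prems unfolding row_standard_def x by blast
  then show ?case using less.IH[of y] b less.prems x by (cases "c = y") auto
qed

lemma std_lt: assumes "young Y" "standard Y s" "(r',c) \<in> boxes Y" "r < r'"
  shows "s (r,c) < s (r',c)"
  using assms(3,4)
proof (induction r' rule: less_induct)
  case (less x)
  then obtain y where x: "x = Suc y" by (cases x) auto
  have b: "(y,c) \<in> boxes Y" using less.prems boxes_down[OF assms(1)] x by (metis le_refl lessI less_imp_le)
  have "s (y,c) < s (x,c)" using assms(2) b less.prems unfolding standard_def x by blast
  then show ?case using less.IH[of y] b less.prems x by (cases "r = y") auto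
qed

lemma down_closed_nat: assumes "finite (S::nat set)" "\<And>x y. x \<in> S \<Longrightarrow> y \<le> x \<Longrightarrow> y \<in> S"
  shows "S = {..<card S}"
proof -
  define k where "k = (if S = {} then 0 else Suc (Max S))"
  have "S = {..<k}"
  proof (cases "S = {}")
    case False
    show ?thesis using assms False unfolding k_def
      by (auto simp: less_Suc_eq_le) (metis Max_in empty_iff assms)
  qed (simp add: k_def)
  then show ?thesis by simp
qed




definition colset :: "nat list \<Rightarrow> tableau \<Rightarrow> nat \<Rightarrow> nat set" where
  "colset Y s c = s ` {b \<in> boxes Y. snd b = c}"

locale tab = fixes Y :: "nat list" and T :: tableau
  assumes young: "young Y" and stdT: "standard Y T"
begin

abbreviation "BX \<equiv> boxes Y"
abbreviation "N \<equiv> size_sh Y"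

lemma tabT: "tableau Y T" using stdT std_rs rs_tab by blast

definition H :: "nat \<Rightarrow> nat" where "H c = card {r. (r,c) \<in> BX}"

lemma col_rows: "{r. (r,c) \<in> BX} = {..<H c}"
  unfolding H_def
proof (rule down_closed_nat)
  show "finite {r. (r, c) \<in> BX}"
    by (rule finite_subset[of _ "{..<length Y}"]) (auto simp: in_boxes)
qed (use boxes_down[OF young] in blast)

lemma colbox: "{b \<in> BX. snd b = c} = (\<lambda>r. (r,c)) ` {..<H c}"
  using col_rows[of c] by force

lemma colset_alt: "{s (r', c) |r'. (r', c) \<in> BX} = colset Y s c"
  unfolding colset_def by force

lemma card_colset: assumes "tableau Y s" shows "card (colset Y s c) = H c"
proof -
  have "inj_on s {b \<in> BX. snd b = c}" using tab_inj[OF assms] by (rule inj_on_subset) auto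
  then have "card (colset Y s c) = card {b \<in> BX. snd b = c}" unfolding colset_def by (rule card_image)
  also have "\<dots> = H c" unfolding colbox by (subst card_image) (auto simp: inj_on_def)
  finally show ?thesis .
qed

lemma sorted_colT: assumes "r < H c"
  shows "sorted_list_of_set (colset Y T c) ! r = T (r,c)"
proof -
  define l where "l = map (\<lambda>r. T (r,c)) [0..<H c]"
  have sw: "sorted_wrt (<) l" unfolding l_def sorted_wrt_map
    using std_lt[OF young stdT] col_rows[of c]
    by (auto simp: sorted_wrt_iff_nth_less)
  have set: "set l = colset Y T c" unfolding l_def colset_def colbox by auto
  have len: "length l = card (colset Y T c)" using card_colset[OF tabT] by (simp add: l_def)
  have "sorted_list_of_set (colset Y T c) = l"
    using sorted_list_of_set_unique[of "colset Y T c" l] sw set len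
    by (simp add: colset_def finite_boxes)
  then show ?thesis using assms by (simp add: l_def)
qed

lemma fiber_iff: assumes "row_standard Y s"
  shows "st Y s = T \<longleftrightarrow> (\<forall>c. colset Y s c = colset Y T c)"
proof
  assume h: "\<forall>c. colset Y s c = colset Y T c"
  show "st Y s = T"
  proof (rule ext, clarify)
    fix r c
    show "st Y s (r,c) = T (r,c)"
    proof (cases "(r,c) \<in> BX")
      case True
      then have "r < H c" using col_rows by blast
      then show ?thesis using True h by (simp add: st_def colset_alt sorted_colT)
    next
      case False then show ?thesis using tab_out[OF tabT] by (simp add: st_def)
    qed
  qed
next
  assume h: "st Y s = T"
  show "\<forall>c. colset Y s c = colset Y T c"
  proof
    fix c
    define L where "L = sorted_list_of_set (colset Y s c)"
    have lenL: "length L = H c" unfolding L_def using card_colset[OF rs_tab[OF assms]]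
      by (simp add: colset_def finite_boxes)
    have "colset Y T c = (\<lambda>r. T (r,c)) ` {..<H c}" unfolding colset_def colbox by auto
    also have "\<dots> = (\<lambda>r. L ! r) ` {..<H c}"
    proof (rule image_cong[OF refl])
      fix r assume "r \<in> {..<H c}"
      then have "(r,c) \<in> BX" using col_rows by blast
      then show "T (r,c) = L ! r" using h[symmetric] by (simp add: st_def colset_alt L_def)
    qed
    also have "\<dots> = set L" using lenL by (auto simp: set_conv_nth)
    also have "\<dots> = colset Y s c" unfolding L_def by (simp add: colset_def finite_boxes)
    finally show "colset Y s c = colset Y T c" ..
  qed
qed

end



definition sw :: "nat \<Rightarrow> nat \<Rightarrow> box \<Rightarrow> box" where
  "sw r c = (\<lambda>(x, y). if y \<le> c \<and> x = r then (r - 1, y)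
               else if y \<le> c \<and> x = r - 1 then (r, y) else (x, y))"

lemma sw_invol[simp]: "sw r c (sw r c b) = b"
  by (cases b) (auto simp: sw_def)

lemma sw_col[simp]: "snd (sw r c b) = snd b"
  by (cases b) (auto simp: sw_def)

lemma sw_out: "snd b > c \<or> (fst b \<noteq> r \<and> fst b \<noteq> r - 1) \<Longrightarrow> sw r c b = b"
  by (cases b) (auto simp: sw_def)

lemma sw_boxes: assumes "young Y" "(r,c) \<in> boxes Y" "b \<in> boxes Y" shows "sw r c b \<in> boxes Y"
  using assms boxes_down[OF assms(1,2)] by (cases b) (auto simp: sw_def)

lemma sw_notin: assumes "young Y" "(r,c) \<in> boxes Y" "b \<notin> boxes Y" shows "sw r c b = b"
  using assms boxes_down[OF assms(1,2)] by (cases b) (auto simp: sw_def)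

lemma bij_sw: assumes "young Y" "(r,c) \<in> boxes Y" shows "bij_betw (sw r c) (boxes Y) (boxes Y)"
  by (rule bij_betw_byWitness[where f'="sw r c"]) (auto simp: sw_boxes[OF assms])

lemma bij_sw_sub: assumes "\<And>b. b \<in> S \<Longrightarrow> sw r c b \<in> S" shows "bij_betw (sw r c) S S"
  using assms by (intro bij_betw_byWitness[where f'="sw r c"]) auto

lemma delta_sw: "pos Y s i = (r,c) \<Longrightarrow> delta Y i s = s \<circ> sw r c"
  unfolding delta_def sw_def by (rule ext) auto

context tab begin

definition G :: "nat \<Rightarrow> tableau set" where
  "G m = {s. row_standard Y s \<and> (\<forall>c. colset Y s c = colset Y T c) \<and> (\<forall>b\<in>BX. m < T b \<longrightarrow> s b = T b)}"

lemma G_le: assumes "s \<in> G m" "b \<in> BX" shows "s b \<le> m \<longleftrightarrow> T b \<le> m"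
proof
  assume "s b \<le> m"
  then show "T b \<le> m" using assms by (auto simp: G_def)
next
  assume h: "T b \<le> m"
  have ts: "tableau Y s" using assms by (simp add: G_def rs_tab)
  show "s b \<le> m"
  proof (rule ccontr)
    assume "\<not> s b \<le> m"
    moreover obtain b' where b': "b' \<in> BX" "T b' = s b" using tab_ex[OF tabT] tab_range[OF ts assms(2)] by metis
    ultimately have "s b' = T b'" using assms by (auto simp: G_def)
    then have "b' = b" using tab_eq[OF ts b'(1) assms(2)] b' by simp
    then show False using h b' \<open>\<not> s b \<le> m\<close> by simp
  qed
qed

lemma G_mono: "s \<in> G (m - 1) \<Longrightarrow> s \<in> G m"
  by (auto simp: G_def)

definition swapok :: "nat \<Rightarrow> nat \<Rightarrow> nat \<Rightarrow> bool" where
  "swapok m r c \<longleftrightarrow> 1 \<le> r \<and> (r,c) \<in> BX \<and> T (r,c) \<le> m \<and>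
     ((r - 1, Suc c) \<in> BX \<longrightarrow> m < T (r - 1, Suc c))"

lemma swapok_facts: assumes "swapok m r c"
  shows "\<And>y. y \<le> c \<Longrightarrow> (r,y) \<in> BX \<and> (r-1,y) \<in> BX \<and> T (r,y) \<le> m \<and> T (r-1,y) \<le> m"
    and "(r, Suc c) \<in> BX \<Longrightarrow> m < T (r, Suc c)"
    and "(r, Suc c) \<in> BX \<Longrightarrow> (r - 1, Suc c) \<in> BX"
proof -
  have r: "1 \<le> r" "(r,c) \<in> BX" "T (r,c) \<le> m" using assms by (auto simp: swapok_def)
  fix y assume y: "y \<le> c"
  have b1: "(r,y) \<in> BX" "(r-1,y) \<in> BX" using boxes_down[OF young r(2)] y by auto
  have "T (r,y) \<le> T (r,c)" using rs_lt[OF std_rs[OF stdT] r(2), of y] y by (cases "y = c") auto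
  moreover have "T (r-1,y) < T (r,y)" using std_lt[OF young stdT b1(1), of "r-1"] r(1) by simp
  ultimately show "(r,y) \<in> BX \<and> (r-1,y) \<in> BX \<and> T (r,y) \<le> m \<and> T (r-1,y) \<le> m" using b1 r by simp
next
  assume h: "(r, Suc c) \<in> BX"
  show b: "(r - 1, Suc c) \<in> BX" using boxes_down[OF young h] by simp
  have "T (r-1, Suc c) < T (r, Suc c)" using std_lt[OF young stdT h, of "r-1"] assms by (simp add: swapok_def)
  then show "m < T (r, Suc c)" using assms b by (simp add: swapok_def)
qed

lemma G_sw: assumes G: "s \<in> G m" and ok: "swapok m r c"
  shows "s \<circ> sw r c \<in> G m"
proof -
  have rs: "row_standard Y s" and ts: "tableau Y s" using G by (auto simp: G_def rs_tab)
  have rc: "(r,c) \<in> BX" "1 \<le> r" using ok by (auto simp: swapok_def)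
  note F = swapok_facts[OF ok]
  have tab': "tableau Y (s \<circ> sw r c)"
    unfolding tableau_def
    using bij_betw_trans[OF bij_sw[OF young rc(1)]] ts sw_notin[OF young rc(1)] tab_out[OF ts]
    by (auto simp: tableau_def)
  have low: "s (x, y) \<le> m" if "y \<le> c" "x = r \<or> x = r - 1" for x y
    using F(1)[OF that(1)] G_le[OF G] that(2) by blast
  have high: "m < s (x, Suc c)" if "(x, Suc c) \<in> BX" "x = r \<or> x = r - 1" for x
  proof -
    have "m < T (x, Suc c)" using that F(2,3) ok by (auto simp: swapok_def)
    then show ?thesis using G that by (auto simp: G_def)
  qed
  have rowok: "(s \<circ> sw r c) (x, y) < (s \<circ> sw r c) (x, Suc y)"
    if h: "(x,y) \<in> BX" "(x, Suc y) \<in> BX" for x y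
  proof (cases "(x = r \<or> x = r - 1) \<and> y \<le> c")
    case False
    then have "sw r c (x,y) = (x,y)" by (auto simp: sw_def)
    moreover have "sw r c (x,Suc y) = (x,Suc y)" using False by (auto simp: sw_def)
    ultimately show ?thesis using rs h by (simp add: row_standard_def)
  next
    case True
    show ?thesis
    proof (cases "y = c")
      case True
      then have "sw r c (x,Suc y) = (x,Suc y)" by (auto simp: sw_def)
      moreover have "s (sw r c (x,y)) \<le> m" using \<open>(x = r \<or> x = r - 1) \<and> y \<le> c\<close> rc
        by (auto simp: sw_def intro!: low)
      moreover have "m < s (x, Suc y)" using high \<open>(x = r \<or> x = r - 1) \<and> y \<le> c\<close> h True by blast
      ultimately show ?thesis by simp
    next
      case False
      then have y: "Suc y \<le> c" using True by simp
      have "s (r-1,y) < s (r-1,Suc y)" "s (r,y) < s (r,Suc y)"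
        using rs F(1)[OF y] F(1)[of y] y by (auto simp: row_standard_def)
      then show ?thesis using True y rc by (auto simp: sw_def)
    qed
  qed
  have rs': "row_standard Y (s \<circ> sw r c)" using tab' rowok by (simp add: row_standard_def)
  have col': "colset Y (s \<circ> sw r c) cc = colset Y T cc" for cc
  proof -
    have "sw r c ` {b \<in> BX. snd b = cc} = {b \<in> BX. snd b = cc}"
      using bij_sw_sub[of "{b \<in> BX. snd b = cc}" r c] sw_boxes[OF young rc(1)]
      by (simp add: bij_betw_def)
    moreover have "(s \<circ> sw r c) ` {b \<in> BX. snd b = cc} = s ` (sw r c ` {b \<in> BX. snd b = cc})"
      by (simp add: image_comp)
    ultimately show ?thesis using G unfolding colset_def G_def by simp
  qed
  have agree: "(s \<circ> sw r c) b = T b" if "b \<in> BX" "m < T b" for b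
  proof -
    have "sw r c b = b"
    proof (rule sw_out)
      obtain x y where b: "b = (x,y)" by (cases b)
      show "snd b > c \<or> (fst b \<noteq> r \<and> fst b \<noteq> r - 1)"
        using F(1)[of y] that b by (cases "y \<le> c") auto
    qed
    then show ?thesis using G that by (auto simp: G_def)
  qed
  show ?thesis using rs' col' agree by (simp add: G_def)
qed

end



definition ii :: "nat \<Rightarrow> nat \<Rightarrow> bool \<Rightarrow> nat \<Rightarrow> nat \<Rightarrow> nat \<Rightarrow> bool \<Rightarrow> nat \<Rightarrow> bool" where
  "ii v1 x1 e1 R1 v2 x2 e2 R2 \<longleftrightarrow> v1 < v2 \<and> ((\<not> e1 \<or> \<not> e2) \<and> x2 < x1 \<or> e1 \<and> e2 \<and> R2 < R1)"

lemma perw_above: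
  fixes v j m A Bv W x r :: nat
  assumes "v < m" "j < m" "v \<noteq> j" "eB \<longrightarrow> eA" "eB \<longrightarrow> A < Bv" "eA \<longrightarrow> eW \<and> W < A" "x < r - 1" "1 \<le> r"
  shows "of_bool (ii m (r-1) eA A v x eW W) + of_bool (ii j r eB Bv v x eW W) + of_bool (ii v x eW W m (r-1) eA A) + of_bool (ii v x eW W j r eB Bv)
    = (of_bool (ii j (r-1) eA A v x eW W) + of_bool (ii m r eB Bv v x eW W) + of_bool (ii v x eW W j (r-1) eA A) + of_bool (ii v x eW W m r eB Bv) :: nat)"
  using assms unfolding ii_def by (cases "v < j"; cases eA; cases eB; cases eW) auto

lemma perw_below:
  fixes v j m A Bv W x r :: nat
  assumes "v \<noteq> m" "j < m" "v \<noteq> j" "eB \<longrightarrow> eA" "eB \<longrightarrow> A < Bv" "eW \<longrightarrow> eB \<and> Bv < W" "r < x" "1 \<le> r"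
  shows "of_bool (ii m (r-1) eA A v x eW W) + of_bool (ii j r eB Bv v x eW W) + of_bool (ii v x eW W m (r-1) eA A) + of_bool (ii v x eW W j r eB Bv)
    = (of_bool (ii j (r-1) eA A v x eW W) + of_bool (ii m r eB Bv v x eW W) + of_bool (ii v x eW W j (r-1) eA A) + of_bool (ii v x eW W m r eB Bv) :: nat)"
  using assms unfolding ii_def by (cases "v < j"; cases "v < m"; cases eA; cases eB; cases eW) auto

lemma pair_ii:
  fixes j m A Bv r :: nat
  assumes "j < m" "eB \<longrightarrow> eA" "eB \<longrightarrow> A < Bv" "1 \<le> r"
  shows "of_bool (ii m (r-1) eA A j r eB Bv) + of_bool (ii j r eB Bv m (r-1) eA A) = Suc
     (of_bool (ii j (r-1) eA A m r eB Bv) + of_bool (ii m r eB Bv j (r-1) eA A))"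
  using assms unfolding ii_def by (cases eA; cases eB) auto

lemma inv_col: "(x1,c) \<in> boxes Y \<Longrightarrow> (x2,c) \<in> boxes Y \<Longrightarrow> is_inv Y s (x1,c) (x2,c) \<longleftrightarrow>
   ii (s (x1,c)) x1 ((x1,Suc c) \<in> boxes Y) (s (x1, Suc c)) (s (x2,c)) x2 ((x2,Suc c) \<in> boxes Y) (s (x2, Suc c))"
  by (auto simp: is_inv_def ii_def right_def)


lemma ninv_sum: "n_inv Y s = (\<Sum>p\<in>boxes Y \<times> boxes Y. of_bool (is_inv Y s (fst p) (snd p)))"
proof -
  have "boxes Y \<times> boxes Y \<inter> {p. is_inv Y s (fst p) (snd p)} = {(b1, b2). is_inv Y s b1 b2}"
    by (auto simp: is_inv_def)
  then show ?thesis using finite_boxes by (simp add: n_inv_def)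
qed

lemma sw_right: "snd b < c \<Longrightarrow> sw r c (right b) = right (sw r c b)"
  by (cases b) (auto simp: sw_def right_def)

lemma sum_sq_split:
  fixes f :: "'a \<Rightarrow> 'a \<Rightarrow> nat"
  assumes "finite W" "x1 \<notin> W" "x2 \<notin> W" "x1 \<noteq> x2"
  shows "(\<Sum>p\<in>insert x1 (insert x2 W) \<times> insert x1 (insert x2 W). f (fst p) (snd p)) =
     f x1 x1 + f x1 x2 + f x2 x1 + f x2 x2 + (\<Sum>w\<in>W. f x1 w + f x2 w + f w x1 + f w x2)
     + (\<Sum>p\<in>W \<times> W. f (fst p) (snd p))"
proof -
  have e: "\<And>A. (\<Sum>p\<in>A \<times> A. f (fst p) (snd p)) = (\<Sum>a\<in>A. \<Sum>b\<in>A. f a b)"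
    by (simp add: sum.cartesian_product case_prod_beta)
  show ?thesis unfolding e using assms by (simp add: sum.distrib algebra_simps)
qed


lemma F1: assumes y: "young Y" and rc: "(r,c) \<in> boxes Y" and r1: "1 \<le> r"
  and nc: "\<not> (snd b1 = c \<and> snd b2 = c)"
  shows "is_inv Y (s \<circ> sw r c) (sw r c b1) (sw r c b2) = is_inv Y s b1 b2"
proof (cases "snd b1 = snd b2")
  case False then show ?thesis by (simp add: is_inv_def)
next
  case True
  obtain x1 y1 x2 y2 where b: "b1 = (x1,y1)" "b2 = (x2,y2)" by (cases b1, cases b2)
  have mem: "sw r c b \<in> boxes Y \<longleftrightarrow> b \<in> boxes Y" for b
    using sw_boxes[OF y rc, of b] sw_boxes[OF y rc, of "sw r c b"] by auto
  show ?thesis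
  proof (cases "c < snd b1")
    case True
    then have "sw r c b1 = b1" "sw r c b2 = b2" "sw r c (right b1) = right b1" "sw r c (right b2) = right b2"
      using \<open>snd b1 = snd b2\<close> by (auto intro!: sw_out simp: right_def)
    then show ?thesis by (simp add: is_inv_def)
  next
    case False
    then have lt: "snd b1 < c" "snd b2 < c" using nc \<open>snd b1 = snd b2\<close> by auto
    have R: "right (sw r c b) = sw r c (right b)" if "snd b < c" for b using sw_right[OF that] by simp
    have v: "(s \<circ> sw r c) (right (sw r c b)) = s (right b)" if "snd b < c" for b using R[OF that] by simp
    have rin: "right (sw r c b) \<in> boxes Y \<longleftrightarrow> right b \<in> boxes Y" if "snd b < c" for b
      using R[OF that] mem by simp
    have rows: "(right b1 \<notin> boxes Y \<or> right b2 \<notin> boxes Y) \<longrightarrow>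
        (fst (sw r c b1) > fst (sw r c b2) \<longleftrightarrow> fst b1 > fst b2)"
    proof
      assume h: "right b1 \<notin> boxes Y \<or> right b2 \<notin> boxes Y"
      have "(x, Suc y) \<in> boxes Y" if "x = r \<or> x = r - 1" "y < c" for x y
        using boxes_down[OF y rc, of x "Suc y"] that by auto
      then have "\<not> ((x1 = r \<or> x1 = r - 1) \<and> (x2 = r \<or> x2 = r - 1))"
        using h lt b by (auto simp: right_def)
      then show "(fst (sw r c b1) > fst (sw r c b2) \<longleftrightarrow> fst b1 > fst b2)"
        using lt b r1 by (auto simp: sw_def)
    qed
    show ?thesis unfolding is_inv_def using v[OF lt(1)] v[OF lt(2)] rin[OF lt(1)] rin[OF lt(2)] rows mem
      by auto
  qed
qed

context tab begin

lemma inv_step: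
  assumes G: "s \<in> G m" and ok: "swapok m r c" and sm: "s (r,c) = m"
  shows "n_inv Y (s \<circ> sw r c) = Suc (n_inv Y s)"
proof -
  define s' where "s' = s \<circ> sw r c"
  have ts: "tableau Y s" using G by (simp add: G_def rs_tab)
  have r1: "1 \<le> r" and X2: "(r,c) \<in> BX" using ok by (auto simp: swapok_def)
  note F = swapok_facts[OF ok]
  have X1: "(r-1,c) \<in> BX" using F(1)[of c] by simp
  define j where "j = s (r-1,c)"
  have jm: "j < m"
  proof -
    have "j \<le> m" using G_le[OF G X1] F(1)[of c] by (simp add: j_def)
    moreover have "j \<noteq> m" using tab_eq[OF ts X1 X2] r1 sm by (auto simp: j_def)
    ultimately show ?thesis by simp
  qed
  have Aok: "m < s (r-1, Suc c)" if "(r-1, Suc c) \<in> BX"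
    using ok that G by (auto simp: swapok_def G_def)
  have Bok: "(r-1, Suc c) \<in> BX \<and> m < s (r, Suc c) \<and> s (r-1, Suc c) < s (r, Suc c)" if h: "(r, Suc c) \<in> BX"
  proof -
    have "m < T (r, Suc c)" "T (r-1, Suc c) < T (r, Suc c)"
      using F(2)[OF h] std_lt[OF young stdT h, of "r-1"] r1 by auto
    moreover have "m < T (r-1, Suc c)" using ok F(3)[OF h] by (auto simp: swapok_def)
    ultimately show ?thesis using G h F(3)[OF h] by (auto simp: G_def)
  qed
  have above: "s (x,c) < m \<and> ((r-1, Suc c) \<in> BX \<longrightarrow> (x, Suc c) \<in> BX \<and> s (x, Suc c) < s (r-1, Suc c))"
    if "x < r - 1" for x
  proof -
    have xb: "(x,c) \<in> BX" using boxes_down[OF young X1] that by simp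
    have "T (x,c) < T (r,c)" using std_lt[OF young stdT X2] that by simp
    then have "T (x,c) \<le> m" using F(1)[of c] by simp
    then have "s (x,c) \<le> m" using G_le[OF G xb] by simp
    moreover have "s (x,c) \<noteq> m" using tab_eq[OF ts xb X2] that sm by auto
    moreover have "s (x, Suc c) < s (r-1, Suc c)" "(x, Suc c) \<in> BX" if h: "(r-1, Suc c) \<in> BX"
    proof -
      show xb': "(x, Suc c) \<in> BX" using boxes_down[OF young h, of x "Suc c"] \<open>x < r - 1\<close> by simp
      have "T (x, Suc c) < T (r-1, Suc c)" using std_lt[OF young stdT h] \<open>x < r - 1\<close> by simp
      moreover have "m < T (r-1, Suc c)" using ok h by (simp add: swapok_def)
      moreover have "s (r-1, Suc c) = T (r-1, Suc c)" using G h \<open>m < T (r-1, Suc c)\<close> by (auto simp: G_def)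
      moreover have "s (x, Suc c) \<le> m \<or> s (x, Suc c) = T (x, Suc c)"
        using G xb' G_le[OF G xb'] by (cases "m < T (x, Suc c)") (auto simp: G_def)
      ultimately show "s (x, Suc c) < s (r-1, Suc c)" by linarith
    qed
    ultimately show ?thesis by auto
  qed
  have below: "(x, Suc c) \<in> BX \<longrightarrow> (r, Suc c) \<in> BX \<and> s (r, Suc c) < s (x, Suc c)"
    if "r < x" for x
  proof
    assume h: "(x, Suc c) \<in> BX"
    show "(r, Suc c) \<in> BX \<and> s (r, Suc c) < s (x, Suc c)"
    proof
      show rb: "(r, Suc c) \<in> BX" using boxes_down[OF young h] that by simp
      have "T (r, Suc c) < T (x, Suc c)" using std_lt[OF young stdT h] that by simp
      moreover have "m < T (r, Suc c)" using F(2)[OF rb] .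
      ultimately show "s (r, Suc c) < s (x, Suc c)" using G h rb by (auto simp: G_def)
    qed
  qed
  have s'X1: "s' (r-1,c) = m" and s'X2: "s' (r,c) = j"
    using r1 sm by (auto simp: s'_def sw_def j_def)
  have s'w: "s' (x,y) = s (x,y)" if "x \<noteq> r" "x \<noteq> r - 1 \<or> c < y" for x y
    using that by (auto simp: s'_def sw_def)
  have s'R: "s' (x, Suc c) = s (x, Suc c)" for x by (simp add: s'_def sw_def)
  have perw: "of_bool (is_inv Y s' (r-1,c) w) + of_bool (is_inv Y s' (r,c) w) + of_bool (is_inv Y s' w (r-1,c)) + of_bool (is_inv Y s' w (r,c))
     = (of_bool (is_inv Y s (r-1,c) w) + of_bool (is_inv Y s (r,c) w) + of_bool (is_inv Y s w (r-1,c)) + of_bool (is_inv Y s w (r,c)) :: nat)"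
    if w: "w \<in> BX" "snd w = c" "w \<noteq> (r-1,c)" "w \<noteq> (r,c)" for w
  proof -
    obtain x where wx: "w = (x,c)" using w by (cases w) auto
    have xr: "x \<noteq> r" "x \<noteq> r - 1" using w wx by auto
    have vj: "s w \<noteq> j" "s w \<noteq> m" using tab_eq[OF ts w(1) X1] tab_eq[OF ts w(1) X2] w sm by (auto simp: j_def)
    have sw': "s' w = s w" using s'w xr wx by simp
    define eA where "eA = ((r-1, Suc c) \<in> BX)"
    define eB where "eB = ((r, Suc c) \<in> BX)"
    define eW where "eW = ((x, Suc c) \<in> BX)"
    define A where "A = s (r-1, Suc c)"
    define Bv where "Bv = s (r, Suc c)"
    define W where "W = s (x, Suc c)"
    define v where "v = s w"
    have wb: "(x,c) \<in> BX" using w wx by simp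
    have e: "is_inv Y s' (r-1,c) w = ii m (r-1) eA A v x eW W"
       "is_inv Y s' (r,c) w = ii j r eB Bv v x eW W"
       "is_inv Y s' w (r-1,c) = ii v x eW W m (r-1) eA A"
       "is_inv Y s' w (r,c) = ii v x eW W j r eB Bv"
       "is_inv Y s (r-1,c) w = ii j (r-1) eA A v x eW W"
       "is_inv Y s (r,c) w = ii m r eB Bv v x eW W"
       "is_inv Y s w (r-1,c) = ii v x eW W j (r-1) eA A"
       "is_inv Y s w (r,c) = ii v x eW W m r eB Bv"
      unfolding wx using inv_col[OF X1 wb] inv_col[OF X2 wb] inv_col[OF wb X1] inv_col[OF wb X2] s'X1 s'X2 sw' wx
      by (simp_all add: s'R eA_def eB_def eW_def A_def Bv_def W_def v_def j_def sm)
    have base: "eB \<longrightarrow> eA" "eB \<longrightarrow> A < Bv" "v \<noteq> j" "v \<noteq> m"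
      using Bok vj by (auto simp: eA_def eB_def A_def Bv_def v_def)
    consider "x < r - 1" | "r < x" using xr by linarith
    then show ?thesis
    proof cases
      case 1
      note a = above[OF 1]
      have hh: "v < m" "eA \<longrightarrow> eW \<and> W < A" using a wx by (auto simp: v_def eA_def eW_def W_def A_def)
      show ?thesis unfolding e by (rule perw_above) (use hh base jm 1 r1 in auto)
    next
      case 2
      note b = below[OF 2]
      have hh: "eW \<longrightarrow> eB \<and> Bv < W" using b by (auto simp: eB_def eW_def W_def Bv_def)
      show ?thesis unfolding e by (rule perw_below) (use hh base jm 2 r1 in auto)
    qed
  qed
  have pair: "of_bool (is_inv Y s' (r-1,c) (r,c)) + of_bool (is_inv Y s' (r,c) (r-1,c)) = Suc
     (of_bool (is_inv Y s (r-1,c) (r,c)) + of_bool (is_inv Y s (r,c) (r-1,c)))"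
  proof -
    define eA where "eA = ((r-1, Suc c) \<in> BX)"
    define eB where "eB = ((r, Suc c) \<in> BX)"
    define A where "A = s (r-1, Suc c)"
    define Bv where "Bv = s (r, Suc c)"
    have e: "is_inv Y s' (r-1,c) (r,c) = ii m (r-1) eA A j r eB Bv"
      "is_inv Y s' (r,c) (r-1,c) = ii j r eB Bv m (r-1) eA A"
      "is_inv Y s (r-1,c) (r,c) = ii j (r-1) eA A m r eB Bv"
      "is_inv Y s (r,c) (r-1,c) = ii m r eB Bv j (r-1) eA A"
      using inv_col[OF X1 X2, of s'] inv_col[OF X2 X1, of s'] inv_col[OF X1 X2, of s] inv_col[OF X2 X1, of s] s'X1 s'X2
      by (simp_all add: s'R eA_def eB_def A_def Bv_def j_def sm)
    have hh: "eB \<longrightarrow> eA" "eB \<longrightarrow> A < Bv" using Bok by (auto simp: eA_def eB_def A_def Bv_def)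
    show ?thesis unfolding e by (rule pair_ii) (use hh jm r1 in auto)
  qed
  define f where "f p = (of_bool (is_inv Y s (fst p) (snd p)) :: nat)" for p
  define g where "g p = (of_bool (is_inv Y s' (fst p) (snd p)) :: nat)" for p
  define C where "C = {b \<in> BX. snd b = c}"
  define CC where "CC = C \<times> C"
  define ph where "ph = map_prod (sw r c) (sw r c)"
  have finBB: "finite (BX \<times> BX)" using finite_boxes by simp
  have CCsub: "CC \<subseteq> BX \<times> BX" by (auto simp: CC_def C_def)
  have bijB: "bij_betw ph (BX \<times> BX) (BX \<times> BX)" unfolding ph_def
    by (rule bij_betw_map_prod) (rule bij_sw[OF young X2])+
  have bijC: "bij_betw ph CC CC" unfolding ph_def CC_def
    by (rule bij_betw_map_prod) (rule bij_sw_sub, use sw_boxes[OF young X2] in \<open>auto simp: C_def\<close>)+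
  have "n_inv Y s' = sum g (BX \<times> BX)" by (simp add: ninv_sum g_def)
  also have "\<dots> = sum (g \<circ> ph) (BX \<times> BX)"
    using sum.reindex_bij_betw[OF bijB, of g] by simp
  also have "\<dots> = sum (g \<circ> ph) (BX \<times> BX - CC) + sum (g \<circ> ph) CC"
    by (rule sum.subset_diff[OF CCsub finBB])
  also have "sum (g \<circ> ph) (BX \<times> BX - CC) = sum f (BX \<times> BX - CC)"
  proof (rule sum.cong[OF refl])
    fix p assume "p \<in> BX \<times> BX - CC"
    then have "\<not> (snd (fst p) = c \<and> snd (snd p) = c)" by (auto simp: CC_def C_def)
    then show "(g \<circ> ph) p = f p" using F1[OF young X2 r1, of "fst p" "snd p" s]
      by (simp add: g_def f_def ph_def s'_def map_prod_def case_prod_beta)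
  qed
  also have "sum (g \<circ> ph) CC = sum g CC"
    using sum.reindex_bij_betw[OF bijC, of g] by simp
  also have "sum g CC = Suc (sum f CC)"
  proof -
    define W where "W = C - {(r-1,c), (r,c)}"
    have Ceq: "C = insert (r-1,c) (insert (r,c) W)" using X1 X2 by (auto simp: W_def C_def)
    have finW: "finite W" using finite_boxes by (simp add: W_def C_def)
    have ne: "(r-1,c) \<noteq> (r,c)" using r1 by simp
    have WW: "(\<Sum>p\<in>W \<times> W. g p) = (\<Sum>p\<in>W \<times> W. f p)"
    proof (rule sum.cong[OF refl])
      fix p assume p: "p \<in> W \<times> W"
      obtain x1 y1 x2 y2 where pp: "p = ((x1,y1),(x2,y2))" by (cases p) auto
      then have p': "y1 = c" "y2 = c" "x1 \<noteq> r" "x1 \<noteq> r-1" "x2 \<noteq> r" "x2 \<noteq> r - 1"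
        using p by (auto simp: W_def C_def)
      then show "g p = f p" using pp by (simp add: g_def f_def is_inv_def right_def s'w s'R)
    qed
    have z: "\<not> is_inv Y t b b" for t b by (simp add: is_inv_def)
    have "sum g CC = (\<Sum>p\<in>C \<times> C. of_bool (is_inv Y s' (fst p) (snd p)))" by (simp add: CC_def g_def)
    also have "\<dots> = of_bool (is_inv Y s' (r-1,c) (r,c)) + of_bool (is_inv Y s' (r,c) (r-1,c))
       + (\<Sum>w\<in>W. of_bool (is_inv Y s' (r-1,c) w) + of_bool (is_inv Y s' (r,c) w) + of_bool (is_inv Y s' w (r-1,c)) + of_bool (is_inv Y s' w (r,c)))
       + (\<Sum>p\<in>W \<times> W. g p)"
      unfolding Ceq by (subst sum_sq_split) (use finW ne in \<open>auto simp: W_def z g_def\<close>)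
    also have "\<dots> = Suc (of_bool (is_inv Y s (r-1,c) (r,c)) + of_bool (is_inv Y s (r,c) (r-1,c))
       + (\<Sum>w\<in>W. of_bool (is_inv Y s (r-1,c) w) + of_bool (is_inv Y s (r,c) w) + of_bool (is_inv Y s w (r-1,c)) + of_bool (is_inv Y s w (r,c)))
       + (\<Sum>p\<in>W \<times> W. f p))"
      using pair WW perw sum.cong[OF refl, of W] by (simp add: W_def C_def)
    also have "\<dots> = Suc (\<Sum>p\<in>C \<times> C. of_bool (is_inv Y s (fst p) (snd p)))"
      unfolding Ceq by (subst sum_sq_split) (use finW ne in \<open>auto simp: W_def z f_def\<close>)
    finally show ?thesis by (simp add: CC_def f_def)
  qed
  also have "n_inv Y s = sum f (BX \<times> BX - CC) + sum f CC"
    unfolding ninv_sum f_def[symmetric] by (rule sum.subset_diff[OF CCsub finBB])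
  ultimately show ?thesis unfolding s'_def by (simp add: comp_def)
qed

end



lemma inD_core_above:
  fixes v j m A Bv W x r :: nat
  assumes "j < v" "v < m" "eB \<longrightarrow> eA" "eB \<longrightarrow> A < Bv" "eA \<longrightarrow> eW \<and> W < A" "x < r - 1"
  shows "ii j (r-1) eA A v x eW W \<noteq> ii v x eW W m r eB Bv"
  using assms unfolding ii_def by auto

lemma inD_core_below:
  fixes v j m A Bv W x r :: nat
  assumes "j < v" "v < m" "eB \<longrightarrow> eA" "eB \<longrightarrow> A < Bv" "eW \<longrightarrow> eB \<and> Bv < W" "r < x"
  shows "ii j (r-1) eA A v x eW W \<noteq> ii v x eW W m r eB Bv"
  using assms unfolding ii_def by auto

context tab begin

lemma inD:
  assumes G: "s \<in> G m" and ok: "swapok m r c" and sm: "s (r,c) = m"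
  shows "s \<in> D Y m"
proof -
  have ts: "tableau Y s" using G by (simp add: G_def rs_tab)
  have r1: "1 \<le> r" and X2: "(r,c) \<in> BX" using ok by (auto simp: swapok_def)
  note F = swapok_facts[OF ok]
  have X1: "(r-1,c) \<in> BX" using F(1)[of c] by simp
  define j where "j = s (r-1,c)"
  have jm: "j < m"
  proof -
    have "j \<le> m" using G_le[OF G X1] F(1)[of c] by (simp add: j_def)
    moreover have "j \<noteq> m" using tab_eq[OF ts X1 X2] r1 sm by (auto simp: j_def)
    ultimately show ?thesis by simp
  qed
  have Aok: "m < s (r-1, Suc c)" if "(r-1, Suc c) \<in> BX"
    using ok that G by (auto simp: swapok_def G_def)
  have Bok: "(r-1, Suc c) \<in> BX \<and> m < s (r, Suc c) \<and> s (r-1, Suc c) < s (r, Suc c)" if h: "(r, Suc c) \<in> BX"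
  proof -
    have "m < T (r, Suc c)" "T (r-1, Suc c) < T (r, Suc c)"
      using F(2)[OF h] std_lt[OF young stdT h, of "r-1"] r1 by auto
    moreover have "m < T (r-1, Suc c)" using ok F(3)[OF h] by (auto simp: swapok_def)
    ultimately show ?thesis using G h F(3)[OF h] by (auto simp: G_def)
  qed
  have above: "s (x,c) < m \<and> ((r-1, Suc c) \<in> BX \<longrightarrow> (x, Suc c) \<in> BX \<and> s (x, Suc c) < s (r-1, Suc c))"
    if "x < r - 1" for x
  proof -
    have xb: "(x,c) \<in> BX" using boxes_down[OF young X1] that by simp
    have "T (x,c) < T (r,c)" using std_lt[OF young stdT X2] that by simp
    then have "T (x,c) \<le> m" using F(1)[of c] by simp
    then have "s (x,c) \<le> m" using G_le[OF G xb] by simp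
    moreover have "s (x,c) \<noteq> m" using tab_eq[OF ts xb X2] that sm by auto
    moreover have "s (x, Suc c) < s (r-1, Suc c)" "(x, Suc c) \<in> BX" if h: "(r-1, Suc c) \<in> BX"
    proof -
      show xb': "(x, Suc c) \<in> BX" using boxes_down[OF young h, of x "Suc c"] \<open>x < r - 1\<close> by simp
      have "T (x, Suc c) < T (r-1, Suc c)" using std_lt[OF young stdT h] \<open>x < r - 1\<close> by simp
      moreover have "m < T (r-1, Suc c)" using ok h by (simp add: swapok_def)
      moreover have "s (r-1, Suc c) = T (r-1, Suc c)" using G h \<open>m < T (r-1, Suc c)\<close> by (auto simp: G_def)
      moreover have "s (x, Suc c) \<le> m \<or> s (x, Suc c) = T (x, Suc c)"
        using G xb' G_le[OF G xb'] by (cases "m < T (x, Suc c)") (auto simp: G_def)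
      ultimately show "s (x, Suc c) < s (r-1, Suc c)" by linarith
    qed
    ultimately show ?thesis by auto
  qed
  have below: "(x, Suc c) \<in> BX \<longrightarrow> (r, Suc c) \<in> BX \<and> s (r, Suc c) < s (x, Suc c)"
    if "r < x" for x
  proof
    assume h: "(x, Suc c) \<in> BX"
    show "(r, Suc c) \<in> BX \<and> s (r, Suc c) < s (x, Suc c)"
    proof
      show rb: "(r, Suc c) \<in> BX" using boxes_down[OF young h] that by simp
      have "T (r, Suc c) < T (x, Suc c)" using std_lt[OF young stdT h] that by simp
      moreover have "m < T (r, Suc c)" using F(2)[OF rb] .
      ultimately show "s (r, Suc c) < s (x, Suc c)" using G h rb by (auto simp: G_def)
    qed
  qed
  have pos: "pos Y s m = (r,c)" using pos_eq[OF ts X2 sm] .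
  have rs: "row_standard Y s" using G by (simp add: G_def)
  have cond3: "is_inv Y s (r-1,c) k \<noteq> is_inv Y s k (r,c)"
    if k: "k \<in> BX" "snd k = c" "j < s k" "s k < m" for k
  proof -
    obtain x where kx: "k = (x,c)" using k by (cases k) auto
    have xr: "x \<noteq> r" "x \<noteq> r - 1" using k kx sm by (auto simp: j_def)
    define eA where "eA = ((r-1, Suc c) \<in> BX)"
    define eB where "eB = ((r, Suc c) \<in> BX)"
    define eW where "eW = ((x, Suc c) \<in> BX)"
    define A where "A = s (r-1, Suc c)"
    define Bv where "Bv = s (r, Suc c)"
    define W where "W = s (x, Suc c)"
    define v where "v = s k"
    have wb: "(x,c) \<in> BX" using k kx by simp
    have e: "is_inv Y s (r-1,c) k = ii j (r-1) eA A v x eW W"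
       "is_inv Y s k (r,c) = ii v x eW W m r eB Bv"
      unfolding kx using inv_col[OF X1 wb] inv_col[OF wb X2]
      by (simp_all add: eA_def eB_def eW_def A_def Bv_def W_def v_def j_def sm kx)
    have base: "eB \<longrightarrow> eA" "eB \<longrightarrow> A < Bv" "j < v" "v < m"
      using Bok k by (auto simp: eA_def eB_def A_def Bv_def v_def)
    consider "x < r - 1" | "r < x" using xr by linarith
    then show ?thesis
    proof cases
      case 1
      have hh: "eA \<longrightarrow> eW \<and> W < A" using above[OF 1] by (auto simp: eA_def eW_def W_def A_def)
      show ?thesis unfolding e by (rule inD_core_above) (use hh base 1 in auto)
    next
      case 2
      have hh: "eW \<longrightarrow> eB \<and> Bv < W" using below[OF 2] by (auto simp: eB_def eW_def W_def Bv_def)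
      show ?thesis unfolding e by (rule inD_core_below) (use hh base 2 in auto)
    qed
  qed
  show ?thesis unfolding D_def
    using rs pos r1 jm Aok Bok cond3 sm by (auto simp: Let_def right_def j_def)
qed

end



context tab begin

definition cm :: "nat \<Rightarrow> nat" where "cm m = snd (pos Y T m)"
definition rm :: "nat \<Rightarrow> nat" where "rm m = fst (pos Y T m)"

lemma posT: assumes "1 \<le> m" "m \<le> N" shows "(rm m, cm m) \<in> BX" "T (rm m, cm m) = m"
  using pos_in[OF tabT assms] by (auto simp: rm_def cm_def)

definition blk :: "nat \<Rightarrow> nat \<Rightarrow> bool" where
  "blk m r \<longleftrightarrow> (r, cm m) \<in> BX \<and> T (r, cm m) \<le> m \<and> ((r, Suc (cm m)) \<in> BX \<longrightarrow> m < T (r, Suc (cm m)))"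

context
  fixes m assumes m1: "1 \<le> m" and mN: "m \<le> N"
begin

lemma blk_le: "blk m r \<Longrightarrow> r \<le> rm m"
proof (rule ccontr)
  assume b: "blk m r" and "\<not> r \<le> rm m"
  then have "T (rm m, cm m) < T (r, cm m)" using std_lt[OF young stdT, of r "cm m" "rm m"] by (auto simp: blk_def)
  then show False using b posT[OF m1 mN] by (simp add: blk_def)
qed

lemma blk_r0: "blk m (rm m)"
  using posT[OF m1 mN] rs_lt[OF std_rs[OF stdT], of "rm m" "Suc (cm m)" "cm m"] by (auto simp: blk_def)

lemma blk_mid: assumes "blk m r1" "r1 \<le> r" "r \<le> rm m" shows "blk m r"
proof -
  have rb: "(r, cm m) \<in> BX" using boxes_down[OF young posT(1)[OF m1 mN]] assms by simp
  have "T (r, cm m) \<le> m" using posT[OF m1 mN] std_lt[OF young stdT posT(1)[OF m1 mN], of r] assms(3)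
    by (cases "r = rm m") auto
  moreover have "m < T (r, Suc (cm m))" if h: "(r, Suc (cm m)) \<in> BX"
  proof -
    have "(r1, Suc (cm m)) \<in> BX" using boxes_down[OF young h] assms by simp
    then have "m < T (r1, Suc (cm m))" using assms by (simp add: blk_def)
    moreover have "T (r1, Suc (cm m)) \<le> T (r, Suc (cm m))"
      using std_lt[OF young stdT h, of r1] assms(2) by (cases "r1 = r") auto
    ultimately show ?thesis by simp
  qed
  ultimately show ?thesis using rb by (simp add: blk_def)
qed

lemma rowcount: assumes "r < length Y"
  shows "card {c. (r,c) \<in> BX \<and> T (r,c) \<le> m} = Suc (cm m) \<longleftrightarrow> blk m r"
proof -
  define S where "S = {c. (r,c) \<in> BX \<and> T (r,c) \<le> m}"
  have fin: "finite S" by (rule finite_subset[of _ "{..<Y!r}"]) (auto simp: S_def in_boxes)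
  have dc: "y \<in> S" if "x \<in> S" "y \<le> x" for x y
  proof -
    have "(r,y) \<in> BX" using that boxes_down[OF young] by (auto simp: S_def)
    moreover have "T (r,y) \<le> T (r,x)" using that rs_lt[OF std_rs[OF stdT], of r x y]
      by (cases "y = x") (auto simp: S_def)
    ultimately show ?thesis using that by (auto simp: S_def)
  qed
  have Seq: "S = {..<card S}" by (rule down_closed_nat[OF fin dc])
  have "card S = Suc (cm m) \<longleftrightarrow> cm m \<in> S \<and> Suc (cm m) \<notin> S"
    by (subst (2 3) Seq) auto
  then show ?thesis unfolding S_def[symmetric] by (auto simp: S_def blk_def)
qed

lemma prow_eq: "prow Y T m = card {r. blk m r}"
proof -
  have "{r. r < length Y \<and> card {c. (r, c) \<in> BX \<and> T (r, c) \<le> m} = qcol Y T m} = {r. blk m r}"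
    using rowcount by (auto simp: qcol_def cm_def[symmetric] blk_def in_boxes)
  then show ?thesis by (simp add: prow_def)
qed

lemma blk_interval: "t < prow Y T m \<longleftrightarrow> t \<le> rm m \<and> blk m (rm m - t)"
proof -
  define S where "S = {r. blk m r}"
  have fin: "finite S" by (rule finite_subset[of _ "{..rm m}"]) (auto simp: S_def blk_le)
  have ne: "rm m \<in> S" using blk_r0 by (simp add: S_def)
  define a where "a = Min S"
  have aS: "a \<in> S" using fin ne unfolding a_def by (metis Min_in empty_iff)
  have "S = {a..rm m}"
  proof
    show "S \<subseteq> {a..rm m}"
    proof
      fix x assume x: "x \<in> S"
      have "a \<le> x" unfolding a_def using fin x by (rule Min_le)
      moreover have "x \<le> rm m" using x blk_le by (simp add: S_def)
      ultimately show "x \<in> {a..rm m}" by simp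
    qed
    show "{a..rm m} \<subseteq> S"
    proof
      fix x assume "x \<in> {a..rm m}"
      then show "x \<in> S" using blk_mid[of a x] aS by (simp add: S_def)
    qed
  qed
  then have "prow Y T m = Suc (rm m) - a" by (simp add: prow_eq S_def[symmetric])
  moreover have "a \<le> rm m" using aS blk_le by (simp add: S_def)
  moreover have Sx: "blk m x \<longleftrightarrow> a \<le> x \<and> x \<le> rm m" for x 
  proof -
    have "x \<in> S \<longleftrightarrow> x \<in> {a..rm m}" using \<open>S = {a..rm m}\<close> by simp
    then show ?thesis by (simp add: S_def)
  qed
  ultimately show ?thesis unfolding Sx[of "rm m - t"] by linarith
qed

lemma prow_pos: "0 < prow Y T m"
  using blk_interval[of 0] blk_r0 by simp

lemma blk_swapok: "blk m r \<Longrightarrow> blk m (r - 1) \<Longrightarrow> 1 \<le> r \<Longrightarrow> swapok m r (cm m)"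
  by (simp add: blk_def swapok_def)

lemma Gpos: assumes "s \<in> G m"
  shows "\<exists>r. (r, cm m) \<in> BX \<and> s (r, cm m) = m \<and> blk m r"
proof -
  have ts: "tableau Y s" and rs: "row_standard Y s" using assms by (auto simp: G_def rs_tab)
  obtain b where b: "b \<in> BX" "s b = m" using tab_ex[OF ts m1 mN] by blast
  have "m \<in> colset Y T (snd b)" using assms b by (auto simp: G_def colset_def[of Y s] dest!: spec[of _ "snd b"])
  then obtain b' where b': "b' \<in> BX" "snd b' = snd b" "T b' = m" by (auto simp: colset_def)
  have "b' = pos Y T m" using pos_eq[OF tabT b'(1,3)] by simp
  then have c: "snd b = cm m" using b' by (simp add: cm_def)
  obtain r where r: "b = (r, cm m)" using c by (cases b) auto
  have "T (r, cm m) \<le> m" using G_le[OF assms, of "(r, cm m)"] b r by auto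
  moreover have "m < T (r, Suc (cm m))" if h: "(r, Suc (cm m)) \<in> BX"
  proof -
    have "s (r, cm m) < s (r, Suc (cm m))" using rs_lt[OF rs h] by simp
    then show ?thesis using G_le[OF assms h] b r by auto
  qed
  ultimately show ?thesis using b r by (auto simp: blk_def)
qed

lemma Gm1_iff: "s \<in> G (m - 1) \<longleftrightarrow> s \<in> G m \<and> s (rm m, cm m) = m"
proof
  assume h: "s \<in> G (m - 1)"
  then show "s \<in> G m \<and> s (rm m, cm m) = m" using G_mono posT[OF m1 mN] m1
    by (auto simp: G_def)
next
  assume h: "s \<in> G m \<and> s (rm m, cm m) = m"
  have "s b = T b" if "b \<in> BX" "m - 1 < T b" for b
  proof (cases "T b = m")
    case True
    then have "b = (rm m, cm m)" using tab_eq[OF tabT that(1) posT(1)[OF m1 mN]] posT[OF m1 mN] by simp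
    then show ?thesis using h True by simp
  next
    case False then show ?thesis using h that by (auto simp: G_def)
  qed
  then show "s \<in> G (m - 1)" using h by (auto simp: G_def)
qed

abbreviation "dl \<equiv> delta Y m"

lemma iter: assumes s0: "s0 \<in> G (m - 1)" and t: "t < prow Y T m"
  shows "(dl ^^ t) s0 \<in> G m \<and> (dl ^^ t) s0 (rm m - t, cm m) = m \<and> n_inv Y ((dl ^^ t) s0) = n_inv Y s0 + t"
  using t
proof (induction t)
  case 0 then show ?case using Gm1_iff s0 by simp
next
  case (Suc t)
  define s where "s = (dl ^^ t) s0"
  have IH: "s \<in> G m" "s (rm m - t, cm m) = m" "n_inv Y s = n_inv Y s0 + t"
    using Suc by (auto simp: s_def)
  have b1: "Suc t \<le> rm m" "blk m (rm m - Suc t)" using blk_interval Suc.prems by auto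
  have b0: "blk m (rm m - t)" using blk_interval[of t] Suc.prems by simp
  define r where "r = rm m - t"
  have r1: "1 \<le> r" using b1 by (simp add: r_def)
  have ok: "swapok m r (cm m)" using blk_swapok b0 b1 r1 by (simp add: r_def)
  have ts: "tableau Y s" using IH by (simp add: G_def rs_tab)
  have rb: "(r, cm m) \<in> BX" using b0 by (simp add: blk_def r_def)
  have pos: "pos Y s m = (r, cm m)" using pos_eq[OF ts rb] IH by (simp add: r_def)
  have d: "dl s = s \<circ> sw r (cm m)" using delta_sw[OF pos] .
  have ne: "rm m - Suc t \<noteq> rm m - t" "rm m - t - 1 = rm m - Suc t" using b1 by arith+
  have np: "(s \<circ> sw r (cm m)) (rm m - Suc t, cm m) = m" using r1 IH ne by (simp add: sw_def r_def)
  have eq: "(dl ^^ Suc t) s0 = s \<circ> sw r (cm m)" using d by (simp add: s_def)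
  have g1: "s \<circ> sw r (cm m) \<in> G m" by (rule G_sw[OF IH(1) ok])
  have g2: "n_inv Y (s \<circ> sw r (cm m)) = Suc (n_inv Y s)" by (rule inv_step[OF IH(1) ok]) (simp add: r_def IH(2))
  show ?case unfolding eq by (intro conjI g1 np) (simp only: g2 IH(3) add_Suc_right)
qed

lemma iterD: assumes s0: "s0 \<in> G (m - 1)" and t: "Suc t < prow Y T m"
  shows "(dl ^^ t) s0 \<in> D Y m"
proof -
  define s where "s = (dl ^^ t) s0"
  have IH: "s \<in> G m" "s (rm m - t, cm m) = m" using iter[OF s0] t by (auto simp: s_def)
  have b1: "Suc t \<le> rm m" "blk m (rm m - Suc t)" using blk_interval t by auto
  have b0: "blk m (rm m - t)" using blk_interval[of t] t by simp
  have ok: "swapok m (rm m - t) (cm m)" using blk_swapok b0 b1 by (simp add: Suc_diff_Suc)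
  show ?thesis using inD[OF IH(1) ok IH(2)] by (simp add: s_def)
qed

lemma dec: assumes "s \<in> G m"
  shows "\<exists>t s0. t < prow Y T m \<and> s0 \<in> G (m - 1) \<and> s = (dl ^^ t) s0"
proof -
  obtain r where r: "(r, cm m) \<in> BX" "s (r, cm m) = m" "blk m r" using Gpos[OF assms] by blast
  define k where "k = rm m - r"
  show ?thesis using assms r k_def
  proof (induction k arbitrary: s r)
    case 0
    then have "r = rm m" using blk_le by fastforce
    then have "s \<in> G (m - 1)" using 0 Gm1_iff by simp
    then show ?case using prow_pos by (intro exI[of _ 0] exI[of _ s]) simp
  next
    case (Suc k)
    have rr: "r < rm m" "blk m (Suc r)" using Suc.prems blk_le[of r] blk_mid[of r "Suc r"] by auto
    have ok: "swapok m (Suc r) (cm m)" using rr Suc.prems by (simp add: blk_def swapok_def)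
    define s1 where "s1 = s \<circ> sw (Suc r) (cm m)"
    have s1G: "s1 \<in> G m" using G_sw[OF Suc.prems(1) ok] by (simp add: s1_def)
    have s1m: "s1 (Suc r, cm m) = m" using Suc.prems by (simp add: s1_def sw_def)
    have s1b: "(Suc r, cm m) \<in> BX" using rr by (simp add: blk_def)
    have kk: "k = rm m - Suc r" using Suc.prems(5) by simp
    have "\<exists>t s0. t < prow Y T m \<and> s0 \<in> G (m - 1) \<and> s1 = (dl ^^ t) s0"
      using Suc.IH[OF s1G s1b s1m rr(2) kk] .
    then obtain t s0 where ts: "t < prow Y T m" "s0 \<in> G (m - 1)" "s1 = (dl ^^ t) s0" by blast
    have it: "s1 (rm m - t, cm m) = m" using iter[OF ts(2,1)] ts(3) by simp
    have tb: "(rm m - t, cm m) \<in> BX" using blk_interval ts(1) by (simp add: blk_def)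
    have tsl: "tableau Y s1" using s1G by (simp add: G_def rs_tab)
    have "rm m - t = Suc r" using tab_eq[OF tsl tb s1b] it s1m by simp
    then have "rm m - Suc t = r" "Suc t \<le> rm m" by arith+
    then have tt: "Suc t < prow Y T m" using blk_interval[of "Suc t"] Suc.prems by simp
    have pos: "pos Y s1 m = (Suc r, cm m)" using pos_eq[OF tsl s1b s1m] .
    have "dl s1 = s" using delta_sw[OF pos] by (simp add: s1_def fun_eq_iff)
    then have "s = (dl ^^ Suc t) s0" using ts(3) by simp
    then show ?case using tt ts(2) by blast
  qed
qed

lemma uniq: assumes "s0 \<in> G (m - 1)" "s0' \<in> G (m - 1)" "t < prow Y T m" "t' < prow Y T m"
    "(dl ^^ t) s0 = (dl ^^ t') s0'"
  shows "t = t' \<and> s0 = s0'"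
proof -
  have a: "(dl ^^ t) s0 (rm m - t, cm m) = m" "(dl ^^ t') s0' (rm m - t', cm m) = m"
    "(dl ^^ t) s0 \<in> G m"
    using iter[OF assms(1,3)] iter[OF assms(2,4)] by auto
  have ts: "tableau Y ((dl ^^ t) s0)" using a(3) by (simp add: G_def rs_tab)
  have bb: "(rm m - t, cm m) \<in> BX" "(rm m - t', cm m) \<in> BX" "t \<le> rm m" "t' \<le> rm m"
    using blk_interval assms(3,4) by (auto simp: blk_def)
  have "rm m - t = rm m - t'" using tab_eq[OF ts bb(1,2)] a assms(5) by simp
  then have tt: "t = t'" using bb by simp
  have "\<forall>t. t < prow Y T m \<longrightarrow> (dl ^^ t) s0 = (dl ^^ t) s0' \<longrightarrow> s0 = s0'"
  proof (intro allI)
    fix t show "t < prow Y T m \<longrightarrow> (dl ^^ t) s0 = (dl ^^ t) s0' \<longrightarrow> s0 = s0'"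
    proof (induction t)
      case (Suc t)
      show ?case
      proof (intro impI)
        assume h: "Suc t < prow Y T m" "(dl ^^ Suc t) s0 = (dl ^^ Suc t) s0'"
        have i1: "(dl ^^ t) s0 \<in> G m" "(dl ^^ t) s0 (rm m - t, cm m) = m"
             "(dl ^^ t) s0' \<in> G m" "(dl ^^ t) s0' (rm m - t, cm m) = m"
          using iter[OF assms(1)] iter[OF assms(2)] h(1) by auto
        have rb: "(rm m - t, cm m) \<in> BX" using blk_interval[of t] h(1) by (simp add: blk_def)
        have p1: "pos Y ((dl ^^ t) s0) m = (rm m - t, cm m)"
          using pos_eq[of Y "(dl ^^ t) s0" "(rm m - t, cm m)" m] rb i1(1,2) by (simp add: G_def rs_tab)
        have p2: "pos Y ((dl ^^ t) s0') m = (rm m - t, cm m)"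
          using pos_eq[of Y "(dl ^^ t) s0'" "(rm m - t, cm m)" m] rb i1(3,4) by (simp add: G_def rs_tab)
        have "(dl ^^ t) s0 \<circ> sw (rm m - t) (cm m) = (dl ^^ t) s0' \<circ> sw (rm m - t) (cm m)"
          using h(2) delta_sw[OF p1] delta_sw[OF p2] by simp
        then have "((dl ^^ t) s0 \<circ> sw (rm m - t) (cm m)) \<circ> sw (rm m - t) (cm m) =
            ((dl ^^ t) s0' \<circ> sw (rm m - t) (cm m)) \<circ> sw (rm m - t) (cm m)" by simp
        then have "(dl ^^ t) s0 = (dl ^^ t) s0'" by (simp add: comp_def)
        then show "s0 = s0'" using Suc.IH h(1) by simp
      qed
    qed simp
  qed
  note H = this
  have "(dl ^^ t) s0 = (dl ^^ t) s0'" using assms(5) tt by simp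
  then have "s0 = s0'" using H[rule_format, OF assms(3)] by simp
  then show ?thesis using tt by simp
qed

end
end



context tab begin

lemma T_G0: "T \<in> G 0"
  using stdT by (simp add: G_def std_rs)

lemma ninv_T: "n_inv Y T = 0"
proof -
  have "\<not> is_inv Y T b1 b2" for b1 b2
  proof
    assume h: "is_inv Y T b1 b2"
    obtain x1 y x2 y2 where b: "b1 = (x1,y)" "b2 = (x2,y2)" by (cases b1, cases b2)
    have yy: "y2 = y" using h b by (simp add: is_inv_def)
    have bb: "(x1,y) \<in> BX" "(x2,y) \<in> BX" "T (x1,y) < T (x2,y)" using h b yy by (auto simp: is_inv_def)
    have "x1 < x2"
    proof (rule ccontr)
      assume "\<not> x1 < x2"
      then consider "x1 = x2" | "x2 < x1" by linarith
      then show False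
      proof cases
        case 1 then show False using bb by simp
      next
        case 2 then show False using std_lt[OF young stdT bb(1) 2] bb by simp
      qed
    qed
    moreover have "T (x1, Suc y) < T (x2, Suc y)" if "(x2, Suc y) \<in> BX"
      using std_lt[OF young stdT that \<open>x1 < x2\<close>] .
    ultimately show False using h b yy by (auto simp: is_inv_def right_def)
  qed
  then show ?thesis by (simp add: n_inv_def)
qed

lemma seq_take: "(\<forall>i<m. ks!i = ks'!i) \<Longrightarrow> seq_app Y ks m T = seq_app Y ks' m T"
  by (induction m) auto

definition okk :: "nat list \<Rightarrow> bool" where
  "okk ks \<longleftrightarrow> length ks = N \<and> (\<forall>i<N. ks!i < prow Y T (Suc i))"

lemma adm_iff: "admissible Y T ks \<longleftrightarrow> okk ks"
proof -
  have "(\<forall>i\<in>{1..N}. ks ! (i - 1) \<le> prow Y T i - 1) \<longleftrightarrow> (\<forall>i<N. ks!i < prow Y T (Suc i))"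
  proof
    assume h: "\<forall>i\<in>{1..N}. ks ! (i - 1) \<le> prow Y T i - 1"
    show "\<forall>i<N. ks!i < prow Y T (Suc i)"
    proof (intro allI impI)
      fix i assume "i < N"
      then show "ks!i < prow Y T (Suc i)" using h[rule_format, of "Suc i"] prow_pos[of "Suc i"] by simp
    qed
  next
    assume h: "\<forall>i<N. ks!i < prow Y T (Suc i)"
    show "\<forall>i\<in>{1..N}. ks ! (i - 1) \<le> prow Y T i - 1"
    proof
      fix i assume "i \<in> {1..N}"
      then obtain j where "i = Suc j" "j < N" by (cases i) auto
      then show "ks ! (i - 1) \<le> prow Y T i - 1" using h by fastforce
    qed
  qed
  then show ?thesis by (simp add: admissible_def okk_def)
qed

lemma seq_good: assumes "okk ks" shows "m \<le> N \<Longrightarrow> seq_app Y ks m T \<in> G m \<and>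
   n_inv Y (seq_app Y ks m T) = (\<Sum>i<m. ks!i) \<and>
   (\<forall>i\<in>{1..m}. \<forall>t<ks!(i-1). (delta Y i ^^ t) (seq_app Y ks (i-1) T) \<in> D Y i)"
proof (induction m)
  case 0 then show ?case using T_G0 ninv_T by simp
next
  case (Suc m)
  define s0 where "s0 = seq_app Y ks m T"
  have IH: "s0 \<in> G m" "n_inv Y s0 = (\<Sum>i<m. ks!i)"
     "\<forall>i\<in>{1..m}. \<forall>t<ks!(i-1). (delta Y i ^^ t) (seq_app Y ks (i-1) T) \<in> D Y i"
    using Suc by (auto simp: s0_def)
  have m1: "1 \<le> Suc m" "Suc m \<le> N" using Suc.prems by auto
  have kt: "ks!m < prow Y T (Suc m)" using assms Suc.prems by (simp add: okk_def)
  have s0G: "s0 \<in> G (Suc m - 1)" using IH by simp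
  note it = iter[OF m1 s0G kt]
  have "seq_app Y ks (Suc m) T = (delta Y (Suc m) ^^ (ks!m)) s0" by (simp add: s0_def)
  moreover have "\<forall>t<ks!m. (delta Y (Suc m) ^^ t) s0 \<in> D Y (Suc m)"
    using iterD[OF m1 s0G] kt by auto
  ultimately show ?case using it IH
    by (auto simp: s0_def le_Suc_eq)
qed

lemma seq_exists: "m \<le> N \<Longrightarrow> s \<in> G m \<Longrightarrow> \<exists>ks. okk ks \<and> seq_app Y ks m T = s"
proof (induction m arbitrary: s)
  case 0
  have "s = T"
  proof
    fix b show "s b = T b"
    proof (cases "b \<in> BX")
      case True then show ?thesis using 0 tab_range[OF tabT True] by (auto simp: G_def)
    next
      case False then show ?thesis using 0 tab_out[OF tabT] tab_out[of Y s] by (auto simp: G_def rs_tab)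
    qed
  qed
  moreover have "okk (replicate N 0)" using prow_pos by (simp add: okk_def)
  ultimately show ?case by (intro exI[of _ "replicate N 0"]) simp
next
  case (Suc m)
  have m1: "1 \<le> Suc m" "Suc m \<le> N" using Suc.prems by auto
  obtain t s0 where ts: "t < prow Y T (Suc m)" "s0 \<in> G m" "s = (delta Y (Suc m) ^^ t) s0"
    using dec[OF m1 Suc.prems(2)] by auto
  obtain ks where ks: "okk ks" "seq_app Y ks m T = s0" using Suc.IH[OF _ ts(2)] Suc.prems by auto
  define ks' where "ks' = ks[m := t]"
  have len: "length ks = N" using ks by (simp add: okk_def)
  have ok': "okk ks'" using ks ts(1) len m1 by (auto simp: okk_def ks'_def nth_list_update)
  have "seq_app Y ks' m T = s0" using ks seq_take[of m ks' ks] by (simp add: ks'_def)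
  then have "seq_app Y ks' (Suc m) T = s" using ts len m1 by (simp add: ks'_def)
  then show ?case using ok' by blast
qed

lemma seq_inj: "okk ks \<Longrightarrow> okk ks' \<Longrightarrow> m \<le> N \<Longrightarrow> seq_app Y ks m T = seq_app Y ks' m T \<Longrightarrow> \<forall>i<m. ks!i = ks'!i"
proof (induction m)
  case (Suc m)
  have m1: "1 \<le> Suc m" "Suc m \<le> N" using Suc.prems by auto
  have g: "seq_app Y ks m T \<in> G (Suc m - 1)" "seq_app Y ks' m T \<in> G (Suc m - 1)"
    using seq_good[OF Suc.prems(1)] seq_good[OF Suc.prems(2)] m1 by auto
  have k: "ks!m < prow Y T (Suc m)" "ks'!m < prow Y T (Suc m)" using Suc.prems by (auto simp: okk_def)
  have "ks!m = ks'!m \<and> seq_app Y ks m T = seq_app Y ks' m T"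
    using uniq[OF m1 g k] Suc.prems(4) by simp
  then show ?case using Suc.IH Suc.prems by (auto simp: less_Suc_eq)
qed simp

lemma fiber_G: "row_standard Y s \<and> st Y s = T \<longleftrightarrow> s \<in> G N"
proof -
  have "\<forall>b\<in>BX. \<not> N < T b" using tab_range[OF tabT] by (simp add: not_less)
  then show ?thesis using fiber_iff by (auto simp: G_def)
qed

end

theorem proposition2p3:
  fixes Y :: "nat list" and T :: tableau
  assumes "young Y" and "standard Y T"
  shows "(\<forall>ks. admissible Y T ks \<longrightarrow> well_defined Y ks T)
    \<and> (\<forall>\<tau>. row_standard Y \<tau> \<and> st Y \<tau> = T \<longrightarrow>
          (\<exists>!ks. admissible Y T ks \<and> \<tau> = seq_app Y ks (size_sh Y) T)
          \<and> (\<forall>ks. admissible Y T ks \<and> \<tau> = seq_app Y ks (size_sh Y) T \<longrightarrow>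
                  n_inv Y \<tau> = sum_list ks))
    \<and> (\<forall>m. card {\<tau>. row_standard Y \<tau> \<and> st Y \<tau> = T \<and> n_inv Y \<tau> = m}
           = card {ks. admissible Y T ks \<and> sum_list ks = m})"
proof -
  interpret tab Y T using assms by unfold_locales
  have sl: "n_inv Y (seq_app Y ks (size_sh Y) T) = sum_list ks" if "okk ks" for ks
    using seq_good[OF that, of "size_sh Y"] that by (simp add: okk_def sum_list_sum_nth atLeast0LessThan)
  have img: "seq_app Y ks (size_sh Y) T \<in> G (size_sh Y)" if "okk ks" for ks
    using seq_good[OF that, of "size_sh Y"] by simp
  have inj: "ks = ks'" if "okk ks" "okk ks'" "seq_app Y ks (size_sh Y) T = seq_app Y ks' (size_sh Y) T" for ks ks'
    using seq_inj[OF that(1,2) order_refl that(3)] that(1,2) by (intro nth_equalityI) (auto simp: okk_def)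
  have A: "\<forall>ks. admissible Y T ks \<longrightarrow> well_defined Y ks T"
    using seq_good by (auto simp: adm_iff well_defined_def)
  have B: "\<forall>\<tau>. row_standard Y \<tau> \<and> st Y \<tau> = T \<longrightarrow>
          (\<exists>!ks. admissible Y T ks \<and> \<tau> = seq_app Y ks (size_sh Y) T)
          \<and> (\<forall>ks. admissible Y T ks \<and> \<tau> = seq_app Y ks (size_sh Y) T \<longrightarrow>
                  n_inv Y \<tau> = sum_list ks)"
  proof (intro allI impI)
    fix \<tau> assume h: "row_standard Y \<tau> \<and> st Y \<tau> = T"
    then have "\<tau> \<in> G (size_sh Y)" using fiber_G by simp
    then obtain ks where "okk ks" "seq_app Y ks (size_sh Y) T = \<tau>" using seq_exists by blast
    then have "\<exists>!ks. admissible Y T ks \<and> \<tau> = seq_app Y ks (size_sh Y) T"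
      using inj by (auto simp: adm_iff)
    moreover have "\<forall>ks. admissible Y T ks \<and> \<tau> = seq_app Y ks (size_sh Y) T \<longrightarrow> n_inv Y \<tau> = sum_list ks"
      using sl by (auto simp: adm_iff)
    ultimately show "(\<exists>!ks. admissible Y T ks \<and> \<tau> = seq_app Y ks (size_sh Y) T)
          \<and> (\<forall>ks. admissible Y T ks \<and> \<tau> = seq_app Y ks (size_sh Y) T \<longrightarrow> n_inv Y \<tau> = sum_list ks)" ..
  qed
  have C: "card {\<tau>. row_standard Y \<tau> \<and> st Y \<tau> = T \<and> n_inv Y \<tau> = m}
           = card {ks. admissible Y T ks \<and> sum_list ks = m}" for m
  proof -
    have "bij_betw (\<lambda>ks. seq_app Y ks (size_sh Y) T) {ks. admissible Y T ks \<and> sum_list ks = m}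
        {\<tau>. row_standard Y \<tau> \<and> st Y \<tau> = T \<and> n_inv Y \<tau> = m}"
    proof (rule bij_betw_imageI)
      show "inj_on (\<lambda>ks. seq_app Y ks (size_sh Y) T) {ks. admissible Y T ks \<and> sum_list ks = m}"
        using inj by (auto simp: inj_on_def adm_iff)
      show "(\<lambda>ks. seq_app Y ks (size_sh Y) T) ` {ks. admissible Y T ks \<and> sum_list ks = m} =
          {\<tau>. row_standard Y \<tau> \<and> st Y \<tau> = T \<and> n_inv Y \<tau> = m}"
      proof
        show "(\<lambda>ks. seq_app Y ks (size_sh Y) T) ` {ks. admissible Y T ks \<and> sum_list ks = m} \<subseteq>
          {\<tau>. row_standard Y \<tau> \<and> st Y \<tau> = T \<and> n_inv Y \<tau> = m}"
          using img sl fiber_G by (auto simp: adm_iff)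
        show "{\<tau>. row_standard Y \<tau> \<and> st Y \<tau> = T \<and> n_inv Y \<tau> = m} \<subseteq>
          (\<lambda>ks. seq_app Y ks (size_sh Y) T) ` {ks. admissible Y T ks \<and> sum_list ks = m}"
        proof
          fix \<tau> assume h: "\<tau> \<in> {\<tau>. row_standard Y \<tau> \<and> st Y \<tau> = T \<and> n_inv Y \<tau> = m}"
          then have "\<tau> \<in> G (size_sh Y)" using fiber_G[of \<tau>] by simp
          then obtain ks where ks: "okk ks" "seq_app Y ks (size_sh Y) T = \<tau>" using seq_exists by blast
          then have "sum_list ks = m" using sl h by auto
          then show "\<tau> \<in> (\<lambda>ks. seq_app Y ks (size_sh Y) T) ` {ks. admissible Y T ks \<and> sum_list ks = m}"
            using ks by (auto simp: adm_iff)
        qed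
      qed
    qed
    then show ?thesis by (rule bij_betw_same_card[symmetric])
  qed
  show ?thesis using A B C by blast
qed


end
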